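(* Let $A$ be a unital Banach algebra with unit $1_A$, and let $(c_n)_{n\in\mathbb{Z}}$ be a bounded cosine sequence in $A$, i.e. $c_0=1_A$, $c_{m+n}+c_{m-n}=2c_mc_n$ for all $m,n\in\mathbb{Z}$, and $\sup_{n}\Vert c_n\Vert<\infty$. Assume that the spectrum of $c_1$ is a singleton. Then $(c_n)_{n\ge1}$ is a scalar sequence, and there exists $b\in\mathbb{R}$ such that $c_n=\cos(nb)1_A$ for all $n\ge 1$. *)

theory Defs
  imports "HOL-Analysis.Analysis"
begin

class cbanach_algebra_1 = real_normed_algebra_1 + banach +
  fixes scaleC :: "complex \<Rightarrow> 'a \<Rightarrow> 'a"
  assumes scaleC_of_real: "scaleC (complex_of_real r) x = scaleR r x"
    and scaleC_add_right: "scaleC a (x + y) = scaleC a x + scaleC a y"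
    and scaleC_add_left: "scaleC (a + b) x = scaleC a x + scaleC b x"
    and scaleC_scaleC: "scaleC a (scaleC b x) = scaleC (a * b) x"
    and scaleC_one: "scaleC 1 x = x"
    and norm_scaleC: "norm (scaleC a x) = cmod a * norm x"
    and mult_scaleC_left: "scaleC a x * y = scaleC a (x * y)"
    and mult_scaleC_right: "x * scaleC a y = scaleC a (x * y)"

definition invertible_elem :: "'a::ring_1 \<Rightarrow> bool" where
  "invertible_elem x \<longleftrightarrow> (\<exists>y. x * y = 1 \<and> y * x = 1)"

definition spectrum :: "'a::cbanach_algebra_1 \<Rightarrow> complex set" where
  "spectrum x = {z. \<not> invertible_elem (scaleC z 1 - x)}"

definition cosine_sequence :: "(int \<Rightarrow> 'a::ring_1) \<Rightarrow> bool" where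
  "cosine_sequence c \<longleftrightarrow> c 0 = 1 \<and> (\<forall>m n. c (m + n) + c (m - n) = 2 * c m * c n)"

end

theory Submission
  imports Defs "HOL-Analysis.Analysis"
begin
context cbanach_algebra_1 begin
definition sc :: "complex \<Rightarrow> 'a" where "sc z = scaleC z 1"
end

lemma scaleC_eq: "scaleC z (x::'a::cbanach_algebra_1) = sc z * x"
  by (simp add: sc_def mult_scaleC_left)
lemma scaleC_eq2: "scaleC z (x::'a::cbanach_algebra_1) = x * sc z"
  by (simp add: sc_def mult_scaleC_right)
lemma sc_comm: "sc z * (x::'a::cbanach_algebra_1) = x * sc z"
  by (metis scaleC_eq scaleC_eq2)
lemma sc_add: "(sc (a + b) :: 'a::cbanach_algebra_1) = sc a + sc b"
  by (simp add: sc_def scaleC_add_left)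
lemma sc_mult: "(sc (a * b) :: 'a::cbanach_algebra_1) = sc a * sc b"
  by (simp add: sc_def mult_scaleC_left scaleC_scaleC)
lemma sc_one[simp]: "(sc 1 :: 'a::cbanach_algebra_1) = 1"
  by (simp add: sc_def scaleC_one)
lemma sc_zero[simp]: "(sc 0 :: 'a::cbanach_algebra_1) = 0"
proof -
  have "(sc 0 :: 'a) = sc 0 + sc 0" using sc_add[of 0 0] by simp
  thus ?thesis by simp
qed
lemma sc_minus: "(sc (- a) :: 'a::cbanach_algebra_1) = - sc a"
  using sc_add[of a "-a", where 'a='a] by (simp add: eq_neg_iff_add_eq_0 add.commute)
lemma sc_diff: "(sc (a - b) :: 'a::cbanach_algebra_1) = sc a - sc b"
  by (simp only: diff_conv_add_uminus sc_add sc_minus)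
lemma norm_sc[simp]: "norm (sc z :: 'a::cbanach_algebra_1) = cmod z"
  by (simp add: sc_def norm_scaleC)
lemma sc_of_real: "(sc (complex_of_real r) :: 'a::cbanach_algebra_1) = of_real r"
  unfolding sc_def by (subst scaleC_of_real) (simp add: of_real_def)
lemma sc_power: "(sc (z ^ n) :: 'a::cbanach_algebra_1) = sc z ^ n"
  by (induct n) (simp_all add: sc_mult)
lemma sc_of_nat[simp]: "(sc (of_nat n) :: 'a::cbanach_algebra_1) = of_nat n"
  using sc_of_real[of "real n"] by simp
lemma sc_numeral[simp]: "(sc (numeral n) :: 'a::cbanach_algebra_1) = numeral n"
  using sc_of_nat[of "numeral n"] by simp
lemma sc_sum: "(sc (sum f A) :: 'a::cbanach_algebra_1) = (\<Sum>i\<in>A. sc (f i))"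
  by (induct A rule: infinite_finite_induct) (simp_all add: sc_add)
lemma sc_divide: "z \<noteq> 0 \<Longrightarrow> (sc (w / z) :: 'a::cbanach_algebra_1) * sc z = sc w"
  by (simp flip: sc_mult)

lemmas sc_simps = sc_add sc_mult sc_diff sc_minus sc_power

definition ainv :: "'a::ring_1 \<Rightarrow> 'a" where
  "ainv x = (SOME y. x * y = 1 \<and> y * x = 1)"

lemma ainv_unique: "x * y = 1 \<Longrightarrow> y * x = 1 \<Longrightarrow> ainv x = (y::'a::ring_1)"
proof -
  assume h: "x * y = 1" "y * x = 1"
  have "x * ainv x = 1 \<and> ainv x * x = 1" unfolding ainv_def by (rule someI[of _ y]) (use h in auto)
  then have "ainv x = ainv x * (x * y)" using h by simp
  also have "\<dots> = y" using \<open>x * ainv x = 1 \<and> ainv x * x = 1\<close> by (simp add: mult.assoc[symmetric])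
  finally show ?thesis .
qed

lemma ainv_props: "invertible_elem x \<Longrightarrow> x * ainv x = 1 \<and> ainv x * x = (1::'a::ring_1)"
  unfolding invertible_elem_def ainv_def by (rule someI_ex)

lemma ainv_r: "invertible_elem x \<Longrightarrow> x * ainv x = (1::'a::ring_1)" using ainv_props by blast
lemma ainv_l: "invertible_elem x \<Longrightarrow> ainv x * x = (1::'a::ring_1)" using ainv_props by blast

lemma invertibleI: "x * y = 1 \<Longrightarrow> y * x = 1 \<Longrightarrow> invertible_elem (x::'a::ring_1)"
  unfolding invertible_elem_def by blast

lemma invertible_mult:
  assumes "invertible_elem x" "invertible_elem (y::'a::ring_1)"
  shows "invertible_elem (x * y) \<and> ainv (x * y) = ainv y * ainv x"
proof -
  have 1: "x * y * (ainv y * ainv x) = 1"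
  proof -
    have "x * y * (ainv y * ainv x) = x * (y * ainv y) * ainv x" by (simp add: mult.assoc)
    thus ?thesis by (simp add: ainv_r assms)
  qed
  have 2: "ainv y * ainv x * (x * y) = 1"
  proof -
    have "ainv y * ainv x * (x * y) = ainv y * (ainv x * x) * y" by (simp add: mult.assoc)
    thus ?thesis by (simp add: ainv_l assms)
  qed
  show ?thesis using 1 2 invertibleI ainv_unique by blast
qed

lemma ainv_comm:
  assumes "invertible_elem x" "x * z = z * (x::'a::ring_1)"
  shows "ainv x * z = z * ainv x"
proof -
  have "ainv x * z = ainv x * z * (x * ainv x)" by (simp add: ainv_r assms)
  also have "\<dots> = ainv x * (z * x) * ainv x" by (simp add: mult.assoc)
  also have "\<dots> = (ainv x * x) * z * ainv x" by (simp add: mult.assoc assms)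
  also have "\<dots> = z * ainv x" by (simp add: ainv_l assms)
  finally show ?thesis .
qed

lemma invertible_one[simp]: "invertible_elem (1::'a::ring_1)"
  by (rule invertibleI[of 1 1]) simp_all
lemma ainv_one[simp]: "ainv (1::'a::ring_1) = 1"
  by (rule ainv_unique) simp_all

lemma sc_invertible: "z \<noteq> 0 \<Longrightarrow> invertible_elem (sc z :: 'a::cbanach_algebra_1) \<and> ainv (sc z :: 'a) = sc (1/z)"
proof -
  assume z: "z \<noteq> 0"
  have 1: "sc z * sc (1/z) = (1::'a)" using z by (simp flip: sc_mult)
  have 2: "sc (1/z) * sc z = (1::'a)" using z by (simp flip: sc_mult)
  show ?thesis using 1 2 invertibleI ainv_unique by blast
qed

lemma neumann:
  fixes h :: "'a::cbanach_algebra_1"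
  assumes hn: "norm h < 1"
  shows "invertible_elem (1 - h)" "norm (ainv (1 - h)) \<le> 1 / (1 - norm h)"
    "norm (ainv (1 - h) - 1) \<le> norm h / (1 - norm h)"
proof -
  have gs: "summable (\<lambda>n. norm h ^ n)" using hn by (simp add: summable_geometric)
  have ns: "summable (\<lambda>n. norm (h ^ n))"
    by (rule summable_comparison_test'[OF gs]) (simp add: norm_power_ineq)
  have s: "summable (\<lambda>n. h ^ n)" using ns by (rule summable_norm_cancel)
  define S where "S = (\<Sum>n. h ^ n)"
  have sh: "(\<Sum>n. h ^ Suc n) = S - 1" unfolding S_def using suminf_split_head[OF s] by simp
  have 1: "h * S = S - 1"
    using suminf_mult[OF s, of h] sh unfolding S_def by simp
  have 2: "S * h = S - 1"
    using suminf_mult2[OF s, of h] sh unfolding S_def by (simp add: power_commutes)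
  have r: "(1 - h) * S = 1" using 1 by (simp add: algebra_simps)
  have l: "S * (1 - h) = 1" using 2 by (simp add: algebra_simps)
  show inv: "invertible_elem (1 - h)" using r l by (rule invertibleI)
  have aS: "ainv (1 - h) = S" using r l by (rule ainv_unique)
  have "norm S \<le> (\<Sum>n. norm (h ^ n))" unfolding S_def using ns by (rule summable_norm)
  also have "\<dots> \<le> (\<Sum>n. norm h ^ n)" by (rule suminf_le[OF _ ns gs]) (simp add: norm_power_ineq)
  also have "\<dots> = 1 / (1 - norm h)" using hn by (simp add: suminf_geometric)
  finally show "norm (ainv (1 - h)) \<le> 1 / (1 - norm h)" using aS by simp
  have ns2: "summable (\<lambda>n. norm (h ^ Suc n))" using ns by (rule summable_ignore_initial_segment[where k=1, simplified])
  have gs2: "summable (\<lambda>n. norm h ^ Suc n)" using gs by (rule summable_ignore_initial_segment[where k=1, simplified])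
  have "norm (S - 1) \<le> (\<Sum>n. norm (h ^ Suc n))" using sh[symmetric] summable_norm[OF ns2] by simp
  also have "\<dots> \<le> (\<Sum>n. norm h ^ Suc n)" by (rule suminf_le[OF _ ns2 gs2]) (simp add: norm_power_ineq del: power_Suc)
  also have "\<dots> = norm h * (\<Sum>n. norm h ^ n)" using suminf_mult[OF gs, of "norm h"] by simp
  also have "\<dots> = norm h / (1 - norm h)" using hn by (simp add: suminf_geometric)
  finally show "norm (ainv (1 - h) - 1) \<le> norm h / (1 - norm h)" using aS by simp
qed

lemma inv_near:
  fixes u v :: "'a::cbanach_algebra_1"
  assumes u: "invertible_elem u" and small: "norm (ainv u) * norm (v - u) \<le> 1/2"
  shows "invertible_elem v" "norm (ainv v - ainv u) \<le> 2 * norm (ainv u)^2 * norm (v - u)"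
proof -
  define h where "h = ainv u * (u - v)"
  have hn: "norm h \<le> 1/2" unfolding h_def
    using norm_mult_ineq[of "ainv u" "u - v"] small by (simp add: norm_minus_commute)
  have hn1: "norm h < 1" using hn by simp
  have v: "v = u * (1 - h)" unfolding h_def
    by (simp add: algebra_simps mult.assoc[symmetric] ainv_r u)
  note N = neumann[OF hn1]
  have im: "invertible_elem (u * (1 - h)) \<and> ainv (u * (1 - h)) = ainv (1 - h) * ainv u"
    by (rule invertible_mult[OF u N(1)])
  show "invertible_elem v" using im v by simp
  have av: "ainv v = ainv (1 - h) * ainv u" using im v by metis
  have "ainv v - ainv u = (ainv (1 - h) - 1) * ainv u" unfolding av by (simp add: algebra_simps)
  then have "norm (ainv v - ainv u) \<le> norm (ainv (1 - h) - 1) * norm (ainv u)"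
    by (simp add: norm_mult_ineq)
  also have "\<dots> \<le> (norm h / (1 - norm h)) * norm (ainv u)"
    by (rule mult_right_mono[OF N(3)]) simp
  also have "\<dots> \<le> (2 * norm h) * norm (ainv u)"
  proof (rule mult_right_mono)
    have "norm h * (norm h * 2) \<le> norm h * 1" by (rule mult_left_mono) (use hn in simp_all)
    then show "norm h / (1 - norm h) \<le> 2 * norm h" using hn by (simp add: field_simps)
  qed simp
  also have hh: "norm h \<le> norm (ainv u) * norm (v - u)" unfolding h_def
    using norm_mult_ineq[of "ainv u" "u - v"] by (simp add: norm_minus_commute)
  have "(2 * norm h) * norm (ainv u) \<le> 2 * norm (ainv u)^2 * norm (v - u)"
    using mult_right_mono[OF hh norm_ge_zero[of "ainv u"]] by (simp add: power2_eq_square algebra_simps)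
  finally show "norm (ainv v - ainv u) \<le> 2 * norm (ainv u)^2 * norm (v - u)" .
qed

lemma geom_ring: "(1 - t) * (\<Sum>i<n. t ^ i) = 1 - t ^ n" for t :: "'a::ring_1"
proof (induct n)
  case (Suc n)
  have "(1-t)*(\<Sum>i<Suc n. t^i) = (1-t)*(\<Sum>i<n. t^i) + (1-t)*t^n" by (simp add: algebra_simps)
  also have "\<dots> = (1 - t^n) + (1-t)*t^n" by (simp only: Suc)
  also have "\<dots> = 1 - t^n + (t^n - t*t^n)" by (simp add: algebra_simps)
  finally show ?case by simp
qed simp
lemma geom_ring': "(\<Sum>i<n. t ^ i) * (1 - t) = 1 - t ^ n" for t :: "'a::ring_1"
proof (induct n)
  case (Suc n)
  have "(\<Sum>i<Suc n. t^i)*(1-t) = (\<Sum>i<n. t^i)*(1-t) + t^n*(1-t)" by (simp add: algebra_simps)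
  also have "\<dots> = (1 - t^n) + t^n*(1-t)" by (simp only: Suc)
  also have "\<dots> = 1 - t^n + (t^n - t*t^n)" by (simp add: algebra_simps power_commutes)
  finally show ?case by simp
qed simp

lemma sc_mult_power: "(sc a * x) ^ n = sc (a ^ n) * (x :: 'a::cbanach_algebra_1) ^ n"
proof (induct n)
  case (Suc n)
  have "(sc a * x) ^ Suc n = sc a * x * (sc (a ^ n) * x ^ n)" using Suc by simp
  also have "\<dots> = sc a * sc (a ^ n) * (x * x ^ n)"
    by (metis mult.assoc sc_comm)
  finally show ?case by (simp add: sc_mult)
qed simp

lemma geom_inv:
  fixes t :: "'a::ring_1"
  assumes w: "invertible_elem (1 - t ^ N)"
  shows "invertible_elem (1 - t)" "ainv (1 - t) = (\<Sum>i<N. t ^ i) * ainv (1 - t ^ N)"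
proof -
  define v where "v = (\<Sum>i<N. t ^ i)"
  define w' where "w' = ainv (1 - t ^ N)"
  have c: "(1 - t) * w' = w' * (1 - t)" unfolding w'_def
    by (rule ainv_comm[OF w, symmetric]) (simp add: algebra_simps power_commutes)
  have 1: "(1 - t) * (v * w') = 1"
    using geom_ring[where t=t and n=N] ainv_r[OF w] unfolding v_def w'_def by (simp add: mult.assoc[symmetric])
  have "(v * w') * (1 - t) = v * (1 - t) * w'" using c by (simp add: mult.assoc)
  also have "\<dots> = 1" using geom_ring'[where t=t and n=N] ainv_r[OF w] unfolding v_def w'_def by simp
  finally have 2: "(v * w') * (1 - t) = 1" .
  show "invertible_elem (1 - t)" using 1 2 by (rule invertibleI)
  show "ainv (1 - t) = (\<Sum>i<N. t ^ i) * ainv (1 - t ^ N)"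
    using ainv_unique[OF 1 2] unfolding v_def w'_def .
qed

lemma cis_eq_1_imp: "cis a = 1 \<Longrightarrow> \<exists>n::int. a = of_int (2 * n) * pi"
proof -
  assume h: "cis a = 1"
  have "exp (\<i> * complex_of_real a) = 1" using h by (simp only: cis_conv_exp)
  then have "\<exists>n::int. Im (\<i> * complex_of_real a) = of_int (2 * n) * pi" by (simp only: exp_eq_1)
  then obtain n :: int where "Im (\<i> * complex_of_real a) = of_int (2 * n) * pi" by blast
  moreover have "Im (\<i> * complex_of_real a) = a" by simp
  ultimately show ?thesis by metis
qed

lemma roots_sum:
  assumes N: "N > 0"
  shows "(\<Sum>j<N. cis (2 * pi / N) ^ (j * m)) = (if N dvd m then of_nat N else 0)"
proof -
  define z where "z = cis (2 * pi / N) ^ m"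
  have "cis (2 * pi / N) ^ N = cis (real N * (2 * pi / N))" by (rule Complex.DeMoivre)
  also have "real N * (2 * pi / N) = 2 * pi" using N by simp
  finally have cN: "cis (2 * pi / N) ^ N = 1" by simp
  have zN: "z ^ N = 1" unfolding z_def
    by (metis cN mult.commute power_mult power_one)
  have e: "(\<Sum>j<N. cis (2 * pi / N) ^ (j * m)) = (\<Sum>j<N. z ^ j)"
    unfolding z_def by (simp add: power_mult[symmetric] mult.commute)
  show ?thesis
  proof (cases "N dvd m")
    case True
    then obtain k where k: "m = N * k" by blast
    have "z = 1" unfolding z_def k by (metis cN power_mult power_one)
    then show ?thesis using e True by simp
  next
    case False
    have "z \<noteq> 1"
    proof
      assume "z = 1"
      then have "cis (real m * (2 * pi / N)) = 1" unfolding z_def by (simp add: Complex.DeMoivre)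
      then obtain n :: int where n: "real m * (2 * pi / N) = of_int (2 * n) * pi" using cis_eq_1_imp by blast
      then have "real m = real N * of_int n" using N by (simp add: field_simps)
      then have "int m = int N * n" by (metis of_int_eq_iff of_int_mult of_int_of_nat_eq)
      then have "int N dvd int m" by simp
      then show False using False by simp
    qed
    then show ?thesis using e False geometric_sum[of z N] zN by simp
  qed
qed

definition zet :: "nat \<Rightarrow> complex" where "zet N = cis (2 * pi / N)"

lemma zet_pow_N: "N > 0 \<Longrightarrow> zet N ^ N = 1"
  unfolding zet_def
proof -
  assume N: "N > 0"
  have "cis (2 * pi / N) ^ N = cis (real N * (2 * pi / N))" by (rule Complex.DeMoivre)
  also have "real N * (2 * pi / N) = 2 * pi" using N by simp
  finally show "cis (2 * pi / N) ^ N = 1" by simp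
qed

lemma zet_sum: "N > 0 \<Longrightarrow> (\<Sum>j<N. zet N ^ (j * m)) = (if N dvd m then of_nat N else 0)"
  unfolding zet_def by (rule roots_sum)

lemma norm_zet[simp]: "cmod (zet N) = 1" unfolding zet_def by simp

lemma avg_general:
  fixes y :: "'a::cbanach_algebra_1"
  assumes N: "N > 0" and w: "invertible_elem (1 - y ^ N)"
  shows "\<And>j. invertible_elem (1 - sc (zet N ^ j) * y)"
    and "(\<Sum>j<N. sc (a j) * ainv (1 - sc (zet N ^ j) * y))
        = (\<Sum>i<N. sc (\<Sum>j<N. a j * zet N ^ (j * i)) * y ^ i) * ainv (1 - y ^ N)"
proof -
  define P where "P = ainv (1 - y ^ N)"
  have tN: "(sc (zet N ^ j) * y) ^ N = y ^ N" for j
  proof -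
    have "(zet N ^ j) ^ N = 1" using zet_pow_N[OF N]
      by (simp only: power_mult[symmetric] mult.commute[of j N]) (simp add: power_mult)
    then show ?thesis by (simp add: sc_mult_power)
  qed
  show inv: "invertible_elem (1 - sc (zet N ^ j) * y)" for j
    using geom_inv(1)[of "sc (zet N ^ j) * y" N] tN w by simp
  have ai: "ainv (1 - sc (zet N ^ j) * y) = (\<Sum>i<N. sc (zet N ^ (j * i)) * y ^ i) * P" for j
    using geom_inv(2)[of "sc (zet N ^ j) * y" N] tN w unfolding P_def
    by (simp add: sc_mult_power power_mult)
  have "(\<Sum>j<N. sc (a j) * ainv (1 - sc (zet N ^ j) * y))
      = (\<Sum>j<N. (\<Sum>i<N. sc (a j * zet N ^ (j * i)) * y ^ i) * P)"
  proof (rule sum.cong[OF refl])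
    fix j
    show "sc (a j) * ainv (1 - sc (zet N ^ j) * y) = (\<Sum>i<N. sc (a j * zet N ^ (j * i)) * y ^ i) * P"
      unfolding ai by (simp add: sum_distrib_left sc_mult mult.assoc[symmetric])
  qed
  also have "\<dots> = (\<Sum>j<N. \<Sum>i<N. sc (a j * zet N ^ (j * i)) * y ^ i) * P"
    by (simp add: sum_distrib_right)
  also have "(\<Sum>j<N. \<Sum>i<N. sc (a j * zet N ^ (j * i)) * y ^ i)
      = (\<Sum>i<N. \<Sum>j<N. sc (a j * zet N ^ (j * i)) * y ^ i)"
    by (rule sum.swap)
  also have "\<dots> = (\<Sum>i<N. sc (\<Sum>j<N. a j * zet N ^ (j * i)) * y ^ i)"
    by (simp add: sc_sum sum_distrib_right)
  finally show "(\<Sum>j<N. sc (a j) * ainv (1 - sc (zet N ^ j) * y))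
        = (\<Sum>i<N. sc (\<Sum>j<N. a j * zet N ^ (j * i)) * y ^ i) * ainv (1 - y ^ N)"
    unfolding P_def .
qed

lemma avg_plain:
  fixes y :: "'a::cbanach_algebra_1"
  assumes N: "N > 0" and w: "invertible_elem (1 - y ^ N)"
  shows "(\<Sum>j<N. ainv (1 - sc (zet N ^ j) * y)) = of_nat N * ainv (1 - y ^ N)"
proof -
  have "(\<Sum>j<N. ainv (1 - sc (zet N ^ j) * y)) = (\<Sum>j<N. sc ((\<lambda>_. 1) j) * ainv (1 - sc (zet N ^ j) * y))"
    by simp
  also have "\<dots> = (\<Sum>i<N. sc (\<Sum>j<N. 1 * zet N ^ (j * i)) * y ^ i) * ainv (1 - y ^ N)"
    by (rule avg_general(2)[OF N w])
  also have "(\<Sum>i<N. sc (\<Sum>j<N. 1 * zet N ^ (j * i)) * y ^ i) = (\<Sum>i<N. if i = 0 then of_nat N else (0::'a))"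
  proof (rule sum.cong[OF refl])
    fix i assume i: "i \<in> {..<N}"
    have "N dvd i \<longleftrightarrow> i = 0" using i by (auto dest: dvd_imp_le)
    then show "sc (\<Sum>j<N. 1 * zet N ^ (j * i)) * y ^ i = (if i = 0 then of_nat N else 0)"
      using zet_sum[OF N, of i] by auto
  qed
  also have "\<dots> = of_nat N" using N by (simp add: sum.delta)
  finally show ?thesis .
qed

lemma dvd_window: "N dvd k \<Longrightarrow> 0 < k \<Longrightarrow> k < 2 * N \<Longrightarrow> k = (N::nat)"
proof -
  assume "N dvd k" "0 < k" "k < 2 * N"
  then obtain q where q: "k = N * q" by blast
  with \<open>0 < k\<close> have "q \<ge> 1" by (cases q) auto
  moreover from q \<open>k < 2 * N\<close> have "q < 2" by (metis mult.commute mult_less_cancel2 not_less_zero)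
  ultimately have "q = 1" by simp
  with q show ?thesis by simp
qed

lemma avg_twisted:
  fixes y :: "'a::cbanach_algebra_1"
  assumes N: "N \<ge> 3" and w: "invertible_elem (1 - y ^ N)"
  shows "(\<Sum>j<N. sc (zet N ^ (j * (N - 1)) - zet N ^ j) * ainv (1 - sc (zet N ^ j) * y))
       = of_nat N * (y - y ^ (N - 1)) * ainv (1 - y ^ N)"
proof -
  have N0: "N > 0" using N by simp
  have "(\<Sum>j<N. sc (zet N ^ (j * (N - 1)) - zet N ^ j) * ainv (1 - sc (zet N ^ j) * y))
      = (\<Sum>i<N. sc (\<Sum>j<N. (zet N ^ (j * (N - 1)) - zet N ^ j) * zet N ^ (j * i)) * y ^ i) * ainv (1 - y ^ N)"
    by (rule avg_general(2)[OF N0 w])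
  also have "(\<Sum>i<N. sc (\<Sum>j<N. (zet N ^ (j * (N - 1)) - zet N ^ j) * zet N ^ (j * i)) * y ^ i)
     = (\<Sum>i<N. (if i = 1 then of_nat N * y else 0) - (if i = N - 1 then of_nat N * y ^ (N - 1) else 0))"
  proof (rule sum.cong[OF refl])
    fix i assume i: "i \<in> {..<N}"
    have e: "(\<Sum>j<N. (zet N ^ (j * (N - 1)) - zet N ^ j) * zet N ^ (j * i))
        = (\<Sum>j<N. zet N ^ (j * (i + (N - 1)))) - (\<Sum>j<N. zet N ^ (j * (i + 1)))"
    proof -
      have "(zet N ^ (j * (N - 1)) - zet N ^ j) * zet N ^ (j * i) = zet N ^ (j * (i + (N - 1))) - zet N ^ (j * (i + 1))" for j
      proof -
        have 1: "zet N ^ (j * (N - 1)) * zet N ^ (j * i) = zet N ^ (j * (i + (N - 1)))"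
          by (metis add.commute distrib_left power_add)
        have 2: "zet N ^ j * zet N ^ (j * i) = zet N ^ (j * (i + 1))"
          by (metis add.commute distrib_left mult.right_neutral power_add)
        show ?thesis using 1 2 by (simp add: left_diff_distrib)
      qed
      then show ?thesis by (simp add: sum_subtractf)
    qed
    have d1: "N dvd (i + (N - 1)) \<longleftrightarrow> i = 1"
    proof
      assume "N dvd (i + (N - 1))"
      moreover have "0 < i + (N - 1)" "i + (N - 1) < 2 * N" using i N by auto
      ultimately have "i + (N - 1) = N" by (rule dvd_window)
      then show "i = 1" using N by simp
    qed (use N in simp)
    have d2: "N dvd (i + 1) \<longleftrightarrow> i = N - 1"
    proof
      assume "N dvd (i + 1)"
      moreover have "0 < i + 1" "i + 1 < 2 * N" using i N by auto
      ultimately have "i + 1 = N" by (rule dvd_window)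
      then show "i = N - 1" by simp
    qed (use N in simp)
    show "sc (\<Sum>j<N. (zet N ^ (j * (N - 1)) - zet N ^ j) * zet N ^ (j * i)) * y ^ i
        = (if i = 1 then of_nat N * y else 0) - (if i = N - 1 then of_nat N * y ^ (N - 1) else 0)"
      unfolding e zet_sum[OF N0] d1 d2 by (simp add: sc_diff algebra_simps)
  qed
  also have "\<dots> = of_nat N * y - of_nat N * y ^ (N - 1)"
    using N by (simp add: sum_subtractf sum.delta)
  finally show ?thesis by (simp add: algebra_simps)
qed

lemma cont_g:
  fixes x :: "'a::cbanach_algebra_1"
  assumes inv: "\<And>l. l \<in> S \<Longrightarrow> invertible_elem (1 - sc l * x)"
  shows "continuous_on S (\<lambda>l. ainv (1 - sc l * x))"
  unfolding continuous_on_iff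
proof (intro ballI allI impI)
  fix l0 :: complex and e :: real
  assume l0: "l0 \<in> S" and e: "e > 0"
  define B where "B = norm (ainv (1 - sc l0 * x))"
  define X where "X = norm x"
  define d where "d = min (1 / (2 * (B + 1) * (X + 1))) ((e/2) / (2 * (B + 1)^2 * (X + 1)))"
  have B0: "B \<ge> 0" and X0: "X \<ge> 0" unfolding B_def X_def by simp_all
  have p1: "0 < 1 / (2 * (B + 1) * (X + 1))" using B0 X0 by (intro divide_pos_pos mult_pos_pos) auto
  have p2: "0 < (e/2) / (2 * (B + 1)^2 * (X + 1))" using B0 X0 e by (intro divide_pos_pos mult_pos_pos) auto
  have d0: "d > 0" unfolding d_def using p1 p2 by simp
  show "\<exists>d>0. \<forall>l\<in>S. dist l l0 < d \<longrightarrow> dist (ainv (1 - sc l * x)) (ainv (1 - sc l0 * x)) < e"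
  proof (intro exI conjI ballI impI)
    show "d > 0" by (rule d0)
    fix l assume l: "l \<in> S" and dl: "dist l l0 < d"
    have vu: "(1 - sc l * x) - (1 - sc l0 * x) = sc (l0 - l) * x" by (simp add: sc_diff algebra_simps)
    have nvu: "norm ((1 - sc l * x) - (1 - sc l0 * x)) \<le> cmod (l - l0) * X"
      unfolding vu X_def using norm_mult_ineq[of "sc (l0 - l)" x] by (simp add: norm_minus_commute)
    have ll: "cmod (l - l0) < d" using dl by (simp add: dist_norm)
    have dX: "d * (X + 1) \<le> 1 / (2 * (B + 1))"
    proof -
      have "d * (X + 1) \<le> 1 / (2 * (B + 1) * (X + 1)) * (X + 1)"
        unfolding d_def using X0 by (intro mult_right_mono) auto
      also have "\<dots> = 1 / (2 * (B + 1))"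
      proof -
        have "X + 1 \<noteq> 0" using X0 by simp
        then show ?thesis by simp
      qed
      finally show ?thesis .
    qed
    have dX2: "d * (X + 1) \<le> (e/2) / (2 * (B + 1)^2)"
    proof -
      have "d * (X + 1) \<le> (e/2) / (2 * (B + 1)^2 * (X + 1)) * (X + 1)"
        unfolding d_def using X0 by (intro mult_right_mono) auto
      also have "\<dots> = (e/2) / (2 * (B + 1)^2)"
      proof -
        have "X + 1 \<noteq> 0" using X0 by simp
        then show ?thesis by simp
      qed
      finally show ?thesis .
    qed
    have nX: "norm ((1 - sc l * x) - (1 - sc l0 * x)) \<le> d * (X + 1)"
    proof -
      have "cmod (l - l0) * X \<le> d * (X + 1)"
        using ll X0 d0 by (intro mult_mono) auto
      then show ?thesis using nvu by linarith
    qed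
    have sm: "B * norm ((1 - sc l * x) - (1 - sc l0 * x)) \<le> 1/2"
    proof -
      have "B * norm ((1 - sc l * x) - (1 - sc l0 * x)) \<le> (B + 1) * (1 / (2 * (B + 1)))"
        using nX dX B0 by (intro mult_mono) auto
      also have "\<dots> = 1/2" using B0 by (simp add: field_simps)
      finally show ?thesis .
    qed
    note IN = inv_near[OF inv[OF l0], of "1 - sc l * x", folded B_def]
    have "norm (ainv (1 - sc l * x) - ainv (1 - sc l0 * x)) \<le> 2 * B^2 * norm ((1 - sc l * x) - (1 - sc l0 * x))"
      using IN(2) sm by simp
    also have "\<dots> \<le> 2 * (B + 1)^2 * ((e/2) / (2 * (B + 1)^2))"
    proof (rule mult_mono)
      show "2 * B\<^sup>2 \<le> 2 * (B + 1)\<^sup>2" using B0 by (simp add: power_mono)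
    qed (use nX dX2 B0 in auto)
    also have "\<dots> = e/2" using B0 by (simp add: field_simps)
    finally have "norm (ainv (1 - sc l * x) - ainv (1 - sc l0 * x)) \<le> e/2" .
    then show "dist (ainv (1 - sc l * x)) (ainv (1 - sc l0 * x)) < e"
      using e by (simp add: dist_norm)
  qed
qed

lemma pow2_invertible:
  fixes x :: "'a::cbanach_algebra_1"
  assumes inv: "\<And>l. cmod l \<le> 1 \<Longrightarrow> invertible_elem (1 - sc l * x)"
  shows "cmod l \<le> 1 \<Longrightarrow> invertible_elem (1 - (sc l * x) ^ (2 ^ k))"
proof (induct k arbitrary: l)
  case 0
  then show ?case using inv by simp
next
  case (Suc k)
  define Y where "Y = (sc l * x) ^ (2 ^ k)"
  define eta where "eta = cis (pi / 2 ^ k)"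
  have etaN: "eta ^ (2 ^ k) = -1"
  proof -
    have "eta ^ (2 ^ k) = cis (real (2 ^ k) * (pi / 2 ^ k))" unfolding eta_def by (rule Complex.DeMoivre)
    also have "real (2 ^ k) * (pi / 2 ^ k) = pi" by simp
    finally show ?thesis by simp
  qed
  have 1: "invertible_elem (1 - Y)" unfolding Y_def using Suc by simp
  have "cmod (eta * l) \<le> 1" using Suc.prems unfolding eta_def by (simp add: norm_mult)
  then have 2: "invertible_elem (1 - (sc (eta * l) * x) ^ (2 ^ k))" using Suc.hyps by blast
  have "(sc (eta * l) * x) ^ (2 ^ k) = (sc eta * (sc l * x)) ^ (2 ^ k)" by (simp add: sc_mult mult.assoc)
  also have "\<dots> = sc (eta ^ (2 ^ k)) * Y" unfolding Y_def by (rule sc_mult_power)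
  also have "\<dots> = - Y" by (simp add: etaN sc_minus)
  finally have i2: "invertible_elem (1 + Y)" using 2 by simp
  have "(sc l * x) ^ (2 ^ Suc k) = Y * Y" unfolding Y_def power_add[symmetric] by (simp add: mult_2)
  then have e: "1 - (sc l * x) ^ (2 ^ Suc k) = (1 - Y) * (1 + Y)" by (simp add: algebra_simps)
  show ?case unfolding e using invertible_mult[OF 1 i2] by blast
qed

lemma rickart_step:
  fixes x :: "'a::cbanach_algebra_1"
  assumes inv: "\<And>l. cmod l \<le> 1 \<Longrightarrow> invertible_elem (1 - sc l * x)"
  shows "\<exists>N>0. norm (x ^ N) \<le> 1"
proof -
  define g where "g = (\<lambda>l. ainv (1 - sc l * x))"
  have "continuous_on (cball 0 1) g" unfolding g_def
    by (rule cont_g) (use inv in simp)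
  then have "uniformly_continuous_on (cball 0 1) g"
    by (rule compact_uniformly_continuous) simp
  then have uc: "\<forall>e>0. \<exists>d>0. \<forall>a\<in>cball 0 1. \<forall>b\<in>cball 0 1. dist b a < d \<longrightarrow> dist (g b) (g a) < e"
    unfolding uniformly_continuous_on_def .
  obtain d where d: "d > 0"
    and dd': "\<forall>a\<in>cball 0 1. \<forall>b\<in>cball 0 1. dist b a < d \<longrightarrow> dist (g b) (g a) < 1/2"
    using uc[rule_format, of "1/2"] by auto
  have dd: "\<And>a b. a \<in> cball 0 1 \<Longrightarrow> b \<in> cball 0 1 \<Longrightarrow> dist b a < d \<Longrightarrow> dist (g b) (g a) < 1/2"
    using dd' by blast
  have lim: "(\<lambda>k. cis (pi / 2 ^ k)) \<longlonglongrightarrow> cis 0"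
    by (intro tendsto_intros LIMSEQ_divide_realpow_zero) simp
  then obtain k where k: "dist (cis (pi / 2 ^ k)) 1 < d"
    using d unfolding lim_sequentially by auto
  define N :: nat where "N = 2 ^ k"
  define eta where "eta = cis (pi / 2 ^ k)"
  have N0: "N > 0" unfolding N_def by simp
  have etaN: "eta ^ N = -1"
  proof -
    have "eta ^ N = cis (real (2 ^ k) * (pi / 2 ^ k))" unfolding eta_def N_def by (rule Complex.DeMoivre)
    also have "real (2 ^ k) * (pi / 2 ^ k) = pi" by simp
    finally show ?thesis by simp
  qed
  have eta1: "cmod (eta - 1) < d" using k unfolding eta_def by (simp add: dist_norm)
  have "norm (x ^ N) \<le> 1"
  proof (rule ccontr)
    assume "\<not> norm (x ^ N) \<le> 1"
    then have V: "norm (x ^ N) > 1" by simp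
    define V where "V = norm (x ^ N)"
    define t where "t = root N (1 / V)"
    have V1: "V > 1" using V unfolding V_def by linarith
    have Vp: "V > 0" using V1 by linarith
    have t0: "t > 0" unfolding t_def using Vp N0 by (simp add: real_root_gt_zero)
    have "1 / V \<le> 1" using V1 by simp
    then have t1: "t \<le> 1" unfolding t_def using N0 real_root_le_mono[of N "1/V" 1] by simp
    have tN: "t ^ N = 1 / V" unfolding t_def using Vp N0 by simp
    define y where "y = sc (complex_of_real t) * x"
    define Y where "Y = y ^ N"
    have Yeq: "Y = sc (complex_of_real (t ^ N)) * x ^ N" unfolding Y_def y_def by (simp add: sc_mult_power)
    have "norm Y = cmod (complex_of_real (t ^ N)) * V" unfolding Yeq V_def
      by (simp only: scaleC_eq[symmetric] norm_scaleC)
    then have nY: "norm Y = 1" using tN Vp by (simp add: norm_divide)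
    define y' where "y' = sc eta * y"
    have y'N: "y' ^ N = - Y" unfolding y'_def Y_def by (simp add: sc_mult_power etaN sc_minus)
    have ct: "cmod (complex_of_real t) \<le> 1" using t0 t1 by (simp add: norm_of_real)
    have i1: "invertible_elem (1 - Y)" unfolding Y_def y_def N_def
      using pow2_invertible[OF inv ct] by simp
    have "invertible_elem (1 - y' ^ N)" unfolding y'_def y_def N_def
      using pow2_invertible[OF inv, of "eta * complex_of_real t" k] t1 t0 unfolding eta_def
      by (simp add: norm_mult sc_mult mult.assoc norm_of_real)
    then have i2: "invertible_elem (1 + Y)" using y'N by simp
    define A where "A = ainv (1 - Y)"
    define A' where "A' = ainv (1 + Y)"
    have s1: "(\<Sum>j<N. ainv (1 - sc (zet N ^ j) * y)) = of_nat N * A"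
      unfolding A_def Y_def by (rule avg_plain[OF N0]) (use i1 Y_def in simp)
    have s2: "(\<Sum>j<N. ainv (1 - sc (zet N ^ j) * y')) = of_nat N * A'"
      unfolding A'_def using avg_plain[OF N0, of y'] i2 y'N by simp
    have gj: "ainv (1 - sc (zet N ^ j) * y) = g (zet N ^ j * complex_of_real t)" for j
      unfolding g_def y_def by (simp add: sc_mult mult.assoc)
    have gj': "ainv (1 - sc (zet N ^ j) * y') = g (zet N ^ j * complex_of_real t * eta)" for j
    proof -
      have "sc (zet N ^ j) * (sc eta * (sc (complex_of_real t) * x)) = sc (zet N ^ j * eta * complex_of_real t) * x"
        by (simp add: sc_mult mult.assoc)
      also have "zet N ^ j * eta * complex_of_real t = zet N ^ j * complex_of_real t * eta" by simp
      finally show ?thesis unfolding g_def y'_def y_def by simp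
    qed
    have close: "norm (g (zet N ^ j * complex_of_real t * eta) - g (zet N ^ j * complex_of_real t)) < 1/2" for j
    proof -
      have a: "zet N ^ j * complex_of_real t \<in> cball 0 1" using t0 t1 by (simp add: norm_mult norm_power)
      have b: "zet N ^ j * complex_of_real t * eta \<in> cball 0 1" using t0 t1
        by (simp add: norm_mult norm_power eta_def)
      have "dist (zet N ^ j * complex_of_real t * eta) (zet N ^ j * complex_of_real t)
          = t * cmod (eta - 1)"
      proof -
        have "zet N ^ j * complex_of_real t * eta - zet N ^ j * complex_of_real t
            = zet N ^ j * complex_of_real t * (eta - 1)" by (simp add: algebra_simps)
        then show ?thesis using t0 by (simp add: dist_norm norm_mult norm_power norm_of_real)
      qed
      also have "\<dots> \<le> cmod (eta - 1)" using t1 t0 mult_right_mono[of t 1 "cmod (eta - 1)"] by simp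
      finally have "dist (zet N ^ j * complex_of_real t * eta) (zet N ^ j * complex_of_real t) < d"
        using eta1 by simp
      then show ?thesis using dd[OF a b] by (simp add: dist_norm)
    qed
    have "of_nat N * (A - A') = (\<Sum>j<N. g (zet N ^ j * complex_of_real t) - g (zet N ^ j * complex_of_real t * eta))"
      using s1 s2 gj gj' by (simp add: sum_subtractf algebra_simps)
    then have "norm (of_nat N * (A - A')) \<le> (\<Sum>j<N. norm (g (zet N ^ j * complex_of_real t) - g (zet N ^ j * complex_of_real t * eta)))"
      by (simp add: norm_sum)
    also have "\<dots> < (\<Sum>j<N. 1/2)"
      by (rule sum_strict_mono) (use N0 close in \<open>auto simp: norm_minus_commute\<close>)
    moreover have "norm (of_nat N * (A - A')) = real N * norm (A - A')"
    proof -
      have "of_nat N * (A - A') = real N *\<^sub>R (A - A')" by (simp add: scaleR_conv_of_real)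
      then show ?thesis by simp
    qed
    ultimately have "real N * norm (A - A') < real N / 2" by simp
    then have nA: "norm (A - A') < 1/2" using N0 by simp
    have c: "(1 - Y) * (1 + Y) = (1 + Y) * (1 - Y)" by (simp add: algebra_simps)
    have "(A - A') * (1 - Y) * (1 + Y) = A * (1 - Y) * (1 + Y) - A' * ((1 + Y) * (1 - Y))"
      using c by (simp add: algebra_simps)
    also have "\<dots> = (1 + Y) - (1 - Y)"
      unfolding A_def A'_def using ainv_l[OF i1] ainv_l[OF i2] by (simp add: mult.assoc[symmetric])
    also have "\<dots> = (2::real) *\<^sub>R Y" by (simp add: scaleR_2)
    finally have e2: "(A - A') * (1 - Y) * (1 + Y) = (2::real) *\<^sub>R Y" .
    have "2 = norm ((2::real) *\<^sub>R Y)" using nY by simp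
    also have "\<dots> \<le> norm (A - A') * (norm (1 - Y) * norm (1 + Y))"
    proof -
      have "norm ((A - A') * (1 - Y) * (1 + Y)) \<le> norm ((A - A') * (1 - Y)) * norm (1 + Y)"
        by (rule norm_mult_ineq)
      also have "\<dots> \<le> norm (A - A') * norm (1 - Y) * norm (1 + Y)"
        by (rule mult_right_mono[OF norm_mult_ineq]) simp
      finally show ?thesis unfolding e2 by (simp add: mult.assoc)
    qed
    also have "\<dots> \<le> norm (A - A') * 4"
    proof (rule mult_left_mono)
      have "norm (1 - Y) \<le> 2" using norm_triangle_ineq4[of 1 Y] nY by simp
      moreover have "norm (1 + Y) \<le> 2" using norm_triangle_ineq[of 1 Y] nY by simp
      ultimately show "norm (1 - Y) * norm (1 + Y) \<le> 4"
        using mult_mono[of "norm (1 - Y)" 2 "norm (1 + Y)" 2] by simp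
    qed simp
    finally show False using nA by simp
  qed
  then show ?thesis using N0 by blast
qed

lemma power_bounded:
  fixes x :: "'a::cbanach_algebra_1"
  assumes N: "N > 0" and xN: "norm (x ^ N) \<le> 1"
  shows "\<exists>K. \<forall>n. norm (x ^ n) \<le> K"
proof -
  define K where "K = (\<Sum>i<N. norm (x ^ i))"
  have "norm (x ^ n) \<le> K" for n
  proof -
    have "x ^ n = x ^ (N * (n div N) + n mod N)" by simp
    also have "\<dots> = (x ^ N) ^ (n div N) * x ^ (n mod N)" by (simp only: power_add power_mult)
    finally have "x ^ n = (x ^ N) ^ (n div N) * x ^ (n mod N)" .
    then have "norm (x ^ n) \<le> norm ((x ^ N) ^ (n div N)) * norm (x ^ (n mod N))"
      by (simp add: norm_mult_ineq)
    also have "\<dots> \<le> 1 * norm (x ^ (n mod N))"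
    proof (rule mult_right_mono)
      have "norm ((x ^ N) ^ (n div N)) \<le> norm (x ^ N) ^ (n div N)" by (rule norm_power_ineq)
      also have "\<dots> \<le> 1" using xN by (simp add: power_le_one)
      finally show "norm ((x ^ N) ^ (n div N)) \<le> 1" .
    qed simp
    also have "\<dots> \<le> K" unfolding K_def
      using member_le_sum[of "n mod N" "{..<N}" "\<lambda>i. norm (x ^ i)"] N by simp
    finally show ?thesis .
  qed
  then show ?thesis by blast
qed

lemma cos_even:
  assumes "cosine_sequence c" shows "c (- n) = c n"
proof -
  have "c (0 + n) + c (0 - n) = 2 * c 0 * c n" using assms unfolding cosine_sequence_def by blast
  then show ?thesis using assms unfolding cosine_sequence_def by (simp add: mult_2)
qed

lemma cos_comm:
  fixes c :: "int \<Rightarrow> 'a::cbanach_algebra_1"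
  assumes cs: "cosine_sequence c" shows "c m * c n = c n * c m"
proof -
  have 1: "c (m + n) + c (m - n) = 2 * c m * c n" using cs unfolding cosine_sequence_def by blast
  have 2: "c (n + m) + c (n - m) = 2 * c n * c m" using cs unfolding cosine_sequence_def by blast
  have "c (n - m) = c (m - n)" using cos_even[OF cs, of "m - n"] by simp
  then have "2 * (c m * c n) = 2 * (c n * c m)" using 1 2 by (simp add: add.commute mult.assoc)
  then have "(2::real) *\<^sub>R (c m * c n) = (2::real) *\<^sub>R (c n * c m)"
    by (simp add: scaleR_conv_of_real)
  then show ?thesis by simp
qed

lemma cos_rec:
  fixes c :: "int \<Rightarrow> 'a::cbanach_algebra_1"
  assumes cs: "cosine_sequence c" shows "c (n + 2) = 2 * c (n + 1) * c 1 - c n"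
proof -
  have "c ((n + 1) + 1) + c ((n + 1) - 1) = 2 * c (n + 1) * c 1" using cs unfolding cosine_sequence_def by blast
  then show ?thesis by (simp add: algebra_simps)
qed

lemma two_comm: "x * (2 * y) = 2 * (x * (y::'a::ring_1))"
  by (simp add: mult.assoc[symmetric] mult_2_right mult_2 distrib_right distrib_left)

lemma sc_two: "sc z * (2 * y) = 2 * (sc z * (y::'a::cbanach_algebra_1))"
proof -
  have c: "sc z * sc 2 = (sc 2 * sc z :: 'a)" by (simp only: sc_mult[symmetric] mult.commute)
  have "sc z * (sc 2 * y) = sc 2 * (sc z * y)" by (simp only: mult.assoc[symmetric] c)
  then show ?thesis by simp
qed

lemma partial_identity:
  fixes d :: "nat \<Rightarrow> 'a::cbanach_algebra_1" and w :: complex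
  assumes rec: "\<And>n. d (n + 2) = 2 * d (n + 1) * d 1 - d n"
    and d0: "d 0 = 1"
    and comm: "\<And>n z. d n * sc z = sc z * d n"
  defines "F \<equiv> \<lambda>N. (\<Sum>n<N. sc (w ^ n) * d n)"
    and "P \<equiv> 1 - 2 * (sc w * d 1) + sc (w ^ 2)"
  shows "(2 * F (N + 1) - 1) * P = sc (1 - w ^ 2) + (2 * (sc (w ^ (N + 2)) * d N) - 2 * (sc (w ^ (N + 1)) * d (N + 1)))"
proof (induct N)
  case 0
  have "(2 * F (0 + 1) - 1) * P = P" unfolding F_def using d0 by simp
  also have "\<dots> = sc (1 - w ^ 2) + (2 * (sc (w ^ (0 + 2)) * d 0) - 2 * (sc (w ^ (0 + 1)) * d (0 + 1)))"
    unfolding P_def using d0 by (simp add: sc_diff algebra_simps mult_2 power2_eq_square)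
  finally show ?case .
next
  case (Suc N)
  define D where "D = sc (w ^ (N + 1)) * d (N + 1)"
  have FS: "F (Suc N + 1) = F (N + 1) + D" unfolding F_def D_def by simp
  have sa: "D * (sc w * d 1) = sc (w ^ (N + 2)) * (d (N + 1) * d 1)"
  proof -
    have "D * (sc w * d 1) = sc (w ^ (N + 1)) * (d (N + 1) * sc w) * d 1" unfolding D_def by (simp add: mult.assoc)
    also have "\<dots> = sc (w ^ (N + 1)) * sc w * (d (N + 1) * d 1)" by (simp add: comm mult.assoc)
    also have "\<dots> = sc (w ^ (N + 2)) * (d (N + 1) * d 1)" by (simp add: sc_mult[symmetric] mult_ac)
    finally show ?thesis .
  qed
  have sb: "D * sc (w ^ 2) = sc (w ^ (N + 3)) * d (N + 1)"
  proof -
    have "D * sc (w ^ 2) = sc (w ^ (N + 1)) * (d (N + 1) * sc (w ^ 2))" unfolding D_def by (simp add: mult.assoc)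
    also have "\<dots> = sc (w ^ (N + 1)) * sc (w ^ 2) * d (N + 1)" by (simp add: comm mult.assoc)
    also have "\<dots> = sc (w ^ (N + 1) * w ^ 2) * d (N + 1)" by (simp only: sc_mult)
    also have "w ^ (N + 1) * w ^ 2 = w ^ (N + 3)" by (simp add: power_add power2_eq_square power3_eq_cube)
    finally show ?thesis .
  qed
  have r: "2 * (d (N + 1) * d 1) = d (N + 2) + d N" using rec[of N] by (simp add: mult.assoc)
  have "2 * (2 * (sc (w ^ (N + 2)) * (d (N + 1) * d 1))) = 2 * (sc (w ^ (N + 2)) * (2 * (d (N + 1) * d 1)))"
    by (simp add: sc_two)
  also have "\<dots> = 2 * (sc (w ^ (N + 2)) * d (N + 2)) + 2 * (sc (w ^ (N + 2)) * d N)"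
    unfolding r by (simp add: algebra_simps)
  finally have key: "2 * (2 * (sc (w ^ (N + 2)) * (d (N + 1) * d 1))) = 2 * (sc (w ^ (N + 2)) * d (N + 2)) + 2 * (sc (w ^ (N + 2)) * d N)" .
  have "(2 * F (Suc N + 1) - 1) * P = (2 * F (N + 1) - 1) * P + 2 * (D * P)"
    unfolding FS by (simp add: algebra_simps)
  also have "D * P = D - 2 * (D * (sc w * d 1)) + D * sc (w ^ 2)"
    unfolding P_def by (simp add: algebra_simps two_comm)
  also have "2 * (D - 2 * (D * (sc w * d 1)) + D * sc (w ^ 2))
      = 2 * D - 2 * (2 * (sc (w ^ (N + 2)) * (d (N + 1) * d 1))) + 2 * (sc (w ^ (N + 3)) * d (N + 1))"
    unfolding sa sb by (simp add: algebra_simps)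
  also note key
  also note Suc
  finally show ?case unfolding D_def by (simp add: algebra_simps eval_nat_numeral)
qed

lemma resolvent_series:
  fixes d :: "nat \<Rightarrow> 'a::cbanach_algebra_1" and w :: complex
  assumes rec: "\<And>n. d (n + 2) = 2 * d (n + 1) * d 1 - d n"
    and d0: "d 0 = 1"
    and bnd: "\<And>n. norm (d n) \<le> M"
    and dc: "\<And>n. d n * d 1 = d 1 * d n"
    and w: "cmod w < 1"
  defines "S \<equiv> (\<Sum>n. sc (w ^ n) * d n)"
    and "P \<equiv> 1 - 2 * (sc w * d 1) + sc (w ^ 2)"
  shows "(2 * S - 1) * P = sc (1 - w ^ 2)" "P * (2 * S - 1) = sc (1 - w ^ 2)"
    "norm S \<le> M / (1 - cmod w)"
proof -
  define F where "F = (\<lambda>N. (\<Sum>n<N. sc (w ^ n) * d n))"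
  have M0: "M \<ge> 0" using bnd[of 0] norm_ge_zero[of "d 0"] by linarith
  have tb: "norm (sc (w ^ n) * d n) \<le> M * cmod w ^ n" for n
  proof -
    have "norm (sc (w ^ n) * d n) \<le> cmod (w ^ n) * norm (d n)"
      using norm_mult_ineq[of "sc (w ^ n)" "d n"] by simp
    also have "\<dots> \<le> cmod w ^ n * M" by (simp add: norm_power bnd mult_left_mono)
    finally show ?thesis by (simp add: mult.commute)
  qed
  have tb2: "norm (sc (w ^ k) * d n) \<le> M * cmod w ^ k" for n k
  proof -
    have "norm (sc (w ^ k) * d n) \<le> cmod (w ^ k) * norm (d n)"
      using norm_mult_ineq[of "sc (w ^ k)" "d n"] by simp
    also have "\<dots> \<le> cmod w ^ k * M" by (simp add: norm_power bnd mult_left_mono)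
    finally show ?thesis by (simp add: mult.commute)
  qed
  have gs: "summable (\<lambda>n. M * cmod w ^ n)" using w by (intro summable_mult summable_geometric) simp
  have ns: "summable (\<lambda>n. norm (sc (w ^ n) * d n))"
    by (rule summable_comparison_test'[OF gs]) (simp add: tb)
  have s: "summable (\<lambda>n. sc (w ^ n) * d n)" using ns by (rule summable_norm_cancel)
  have FS: "(\<lambda>N. F (Suc N)) \<longlonglongrightarrow> S" unfolding F_def S_def
    by (rule LIMSEQ_Suc[OF summable_LIMSEQ[OF s]])
  have GL: "(\<lambda>N. (2 * F (Suc N) - 1) * P) \<longlonglongrightarrow> (2 * S - 1) * P"
    by (intro tendsto_intros FS)
  have GL': "(\<lambda>N. P * (2 * F (Suc N) - 1)) \<longlonglongrightarrow> P * (2 * S - 1)"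
    by (intro tendsto_intros FS)
  define E where "E = (\<lambda>N. 2 * (sc (w ^ (N + 2)) * d N) - 2 * (sc (w ^ (N + 1)) * d (N + 1)))"
  have GE: "(2 * F (Suc N) - 1) * P = sc (1 - w ^ 2) + E N" for N
    using partial_identity[OF rec d0 sc_comm[symmetric], of w N] unfolding F_def P_def E_def
    by simp
  have E0: "E \<longlonglongrightarrow> 0"
  proof (rule Lim_null_comparison)
    show "\<forall>\<^sub>F N in sequentially. norm (E N) \<le> 4 * M * cmod w ^ N"
    proof (intro always_eventually allI)
      fix N
      have a: "norm (2 * (sc (w ^ (N + 2)) * d N)) \<le> 2 * (M * cmod w ^ N)"
      proof -
        have "norm (2 * (sc (w ^ (N + 2)) * d N)) \<le> norm (2::'a) * norm (sc (w ^ (N + 2)) * d N)"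
          by (rule norm_mult_ineq)
        also have "\<dots> \<le> 2 * (M * cmod w ^ (N + 2))" using tb2[where n=N and k="N + 2"] by simp
        also have "\<dots> \<le> 2 * (M * cmod w ^ N)"
          using w M0 by (intro mult_left_mono power_decreasing) auto
        finally show ?thesis .
      qed
      have b: "norm (2 * (sc (w ^ (N + 1)) * d (N + 1))) \<le> 2 * (M * cmod w ^ N)"
      proof -
        have "norm (2 * (sc (w ^ (N + 1)) * d (N + 1))) \<le> norm (2::'a) * norm (sc (w ^ (N + 1)) * d (N + 1))"
          by (rule norm_mult_ineq)
        also have "\<dots> \<le> 2 * (M * cmod w ^ (N + 1))" using tb2[where n="N + 1" and k="N + 1"] by simp
        also have "\<dots> \<le> 2 * (M * cmod w ^ N)"
          using w M0 by (intro mult_left_mono power_decreasing) auto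
        finally show ?thesis .
      qed
      show "norm (E N) \<le> 4 * M * cmod w ^ N" unfolding E_def
        using norm_triangle_ineq4[of "2 * (sc (w ^ (N + 2)) * d N)" "2 * (sc (w ^ (N + 1)) * d (N + 1))"] a b
        by simp
    qed
    show "(\<lambda>N. 4 * M * cmod w ^ N) \<longlonglongrightarrow> 0"
      using w by (intro tendsto_mult_right_zero LIMSEQ_power_zero) simp
  qed
  have "(\<lambda>N. (2 * F (Suc N) - 1) * P) \<longlonglongrightarrow> sc (1 - w ^ 2) + 0"
    unfolding GE by (intro tendsto_intros E0)
  then show HP: "(2 * S - 1) * P = sc (1 - w ^ 2)" using GL LIMSEQ_unique by fastforce
  have cP: "x * P = P * x" if xd: "x * d 1 = d 1 * x" for x
  proof -
    have 1: "x * (sc w * d 1) = sc w * (d 1 * x)"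
    proof -
      have "x * (sc w * d 1) = (x * sc w) * d 1" by (simp only: mult.assoc)
      also have "\<dots> = (sc w * x) * d 1" by (simp only: sc_comm)
      also have "\<dots> = sc w * (d 1 * x)" by (simp only: mult.assoc xd)
      finally show ?thesis .
    qed
    have 2: "x * sc (w ^ 2) = sc (w ^ 2) * x" by (simp only: sc_comm)
    show ?thesis unfolding P_def using 1 2 by (simp add: algebra_simps two_comm)
  qed
  have cF: "F N * P = P * F N" for N
  proof -
    have t: "(sc (w ^ n) * d n) * d 1 = d 1 * (sc (w ^ n) * d n)" for n
    proof -
      have "(sc (w ^ n) * d n) * d 1 = sc (w ^ n) * (d 1 * d n)" by (simp only: mult.assoc dc)
      also have "\<dots> = (sc (w ^ n) * d 1) * d n" by (simp only: mult.assoc)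
      also have "\<dots> = (d 1 * sc (w ^ n)) * d n" by (simp only: sc_comm)
      finally show ?thesis by (simp only: mult.assoc)
    qed
    have "F N * d 1 = d 1 * F N" unfolding F_def sum_distrib_left sum_distrib_right
      by (rule sum.cong[OF refl]) (rule t)
    then show ?thesis by (rule cP)
  qed
  have "(2 * F (Suc N) - 1) * P = P * (2 * F (Suc N) - 1)" for N
    using cF[of "Suc N"] by (simp add: algebra_simps two_comm)
  then have "P * (2 * S - 1) = (2 * S - 1) * P" using GL GL' LIMSEQ_unique by fastforce
  then show "P * (2 * S - 1) = sc (1 - w ^ 2)" using HP by simp
  have "norm S \<le> (\<Sum>n. norm (sc (w ^ n) * d n))" unfolding S_def using ns by (rule summable_norm)
  also have "\<dots> \<le> (\<Sum>n. M * cmod w ^ n)" by (rule suminf_le[OF tb ns gs])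
  also have "\<dots> = M * (1 / (1 - cmod w))" using w by (simp add: suminf_mult suminf_geometric summable_geometric)
  finally show "norm S \<le> M / (1 - cmod w)" by simp
qed

lemma jouk_ineq:
  fixes w :: complex
  assumes w0: "w \<noteq> 0" and w1: "cmod w < 1"
  shows "cmod w * \<bar>Im ((w + 1 / w) / 2)\<bar> \<le> (1 - cmod w) * cmod (1 - w ^ 2)"
proof -
  define r where "r = cmod w"
  define y where "y = Im w"
  have r0: "r > 0" unfolding r_def using w0 by simp
  have r1: "r < 1" unfolding r_def using w1 by simp
  have Iinv: "Im (1 / w) = - y / r ^ 2" unfolding y_def r_def by (simp add: Im_divide')
  have Iz: "Im ((w + 1 / w) / 2) = (y - y / r ^ 2) / 2" using Iinv unfolding y_def by simp
  have aIz: "\<bar>Im ((w + 1 / w) / 2)\<bar> = \<bar>y\<bar> * (1 - r ^ 2) / (2 * r ^ 2)"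
  proof -
    have "(y - y / r ^ 2) / 2 = - (y * (1 - r ^ 2) / (2 * r ^ 2))" using r0 by (simp add: field_simps)
    moreover have "1 - r ^ 2 \<ge> 0" using r0 r1 by (simp add: power_le_one)
    ultimately show ?thesis unfolding Iz using r0 by (simp add: abs_mult abs_divide)
  qed
  have "1 - w ^ 2 = w * (1 / w - w)" using w0 by (simp add: field_simps power2_eq_square)
  then have "cmod (1 - w ^ 2) = r * cmod (1 / w - w)" unfolding r_def by (simp add: norm_mult)
  moreover have "cmod (1 / w - w) \<ge> \<bar>y\<bar> * (1 / r ^ 2 + 1)"
  proof -
    have "\<bar>Im (1 / w - w)\<bar> \<le> cmod (1 / w - w)" by (rule abs_Im_le_cmod)
    moreover have "Im (1 / w - w) = - (y * (1 / r ^ 2 + 1))" using Iinv unfolding y_def by (simp add: field_simps)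
    ultimately show ?thesis using r0 by (simp add: abs_mult)
  qed
  ultimately have c1: "cmod (1 - w ^ 2) \<ge> r * (\<bar>y\<bar> * (1 / r ^ 2 + 1))" using r0 by simp
  have "cmod w * \<bar>Im ((w + 1 / w) / 2)\<bar> = \<bar>y\<bar> * ((1 - r) * (1 + r) / (2 * r))"
    unfolding aIz r_def[symmetric] using r0 by (simp add: field_simps power2_eq_square)
  also have "\<dots> \<le> \<bar>y\<bar> * ((1 - r) * ((1 + r ^ 2) / r))"
  proof (rule mult_left_mono)
    have q1: "r ^ 2 \<ge> 0" by simp
    have q2: "(1 + r) / 2 \<le> 1" using r1 by simp
    have "(1 + r) / 2 \<le> 1 + r ^ 2" using q1 q2 by (smt (verit))
    then have "(1 - r) * ((1 + r) / 2) \<le> (1 - r) * (1 + r ^ 2)" using r1 by (intro mult_left_mono) auto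
    then have m: "(1 - r) * ((1 + r) / 2) / r \<le> (1 - r) * (1 + r ^ 2) / r"
      by (rule divide_right_mono) (use r0 in simp)
    have e1: "(1 - r) * (1 + r) / (2 * r) = ((1 - r) * ((1 + r) / 2)) / r" by simp
    have e2: "(1 - r) * ((1 + r ^ 2) / r) = ((1 - r) * (1 + r ^ 2)) / r" by simp
    show "(1 - r) * (1 + r) / (2 * r) \<le> (1 - r) * ((1 + r ^ 2) / r)" unfolding e1 e2 by (rule m)
  qed simp
  also have "\<dots> = (1 - r) * (r * (\<bar>y\<bar> * (1 / r ^ 2 + 1)))" using r0 by (simp add: field_simps power2_eq_square)
  also have "\<dots> \<le> (1 - r) * cmod (1 - w ^ 2)" using c1 r1 by (intro mult_left_mono) auto
  finally show ?thesis unfolding r_def .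
qed

lemma resolvent_w:
  fixes d :: "nat \<Rightarrow> 'a::cbanach_algebra_1" and w :: complex
  assumes rec: "\<And>n. d (n + 2) = 2 * d (n + 1) * d 1 - d n"
    and d0: "d 0 = 1"
    and bnd: "\<And>n. norm (d n) \<le> M"
    and dc: "\<And>n. d n * d 1 = d 1 * d n"
    and w: "cmod w < 1" and w0: "w \<noteq> 0"
  shows "invertible_elem (sc ((w + 1 / w) / 2) - d 1)"
    "norm (ainv (sc ((w + 1 / w) / 2) - d 1)) \<le> 2 * cmod w * (2 * M / (1 - cmod w) + 1) / cmod (1 - w ^ 2)"
proof -
  define S where "S = (\<Sum>n. sc (w ^ n) * d n)"
  define P where "P = 1 - 2 * (sc w * d 1) + sc (w ^ 2)"
  define H where "H = 2 * S - 1"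
  define z where "z = (w + 1 / w) / 2"
  define v where "v = sc z - d 1"
  define k where "k = 1 / (1 - w ^ 2)"
  note RS = resolvent_series[OF rec d0 bnd dc w, folded S_def P_def, folded H_def]
  have wq: "1 - w ^ 2 \<noteq> 0"
  proof
    assume "1 - w ^ 2 = 0"
    then have "cmod (w ^ 2) = 1" by (metis eq_iff_diff_eq_0 norm_one)
    moreover have "cmod w ^ 2 < 1" using power_less_one_iff[of "cmod w" 2] w by simp
    ultimately show False by (simp add: norm_power)
  qed
  have zz: "2 * w * z = 1 + w ^ 2" unfolding z_def using w0 by (simp add: field_simps power2_eq_square)
  have Pv: "P = sc (2 * w) * v"
  proof -
    have "sc (2 * w) * v = sc (2 * w * z) - sc (2 * w) * d 1" unfolding v_def by (simp only: right_diff_distrib sc_mult[symmetric])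
    also have "\<dots> = sc (1 + w ^ 2) - 2 * (sc w * d 1)" unfolding zz by (simp add: sc_mult mult.assoc)
    finally show ?thesis unfolding P_def by (simp add: sc_add)
  qed
  define X where "X = sc (2 * w) * (H * sc k)"
  have sk: "sc (1 - w ^ 2) * sc k = (1::'a)" unfolding k_def using wq by (simp flip: sc_mult)
  have 1: "v * X = 1"
  proof -
    have "v * X = (v * sc (2 * w)) * H * sc k" unfolding X_def by (simp add: mult.assoc)
    also have "\<dots> = P * H * sc k" unfolding Pv by (simp only: sc_comm[of "2*w" v])
    also have "\<dots> = 1" using RS(2) sk unfolding H_def by simp
    finally show ?thesis .
  qed
  have 2: "X * v = 1"
  proof -
    have "X * v = sc (2 * w) * H * (sc k * v)" unfolding X_def by (simp add: mult.assoc)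
    also have "\<dots> = sc (2 * w) * H * (v * sc k)" by (simp only: sc_comm[of k v])
    also have "\<dots> = (sc (2 * w) * H) * v * sc k" by (simp add: mult.assoc)
    also have "\<dots> = H * (sc (2 * w) * v) * sc k" by (simp only: sc_comm[of "2*w" H] mult.assoc)
    also have "\<dots> = H * P * sc k" unfolding Pv ..
    also have "\<dots> = 1" using RS(1) sk unfolding H_def by simp
    finally show ?thesis .
  qed
  show "invertible_elem (sc ((w + 1 / w) / 2) - d 1)" using 1 2 invertibleI unfolding v_def z_def by blast
  have aX: "ainv v = X" using 1 2 by (rule ainv_unique)
  have nH: "norm H \<le> 2 * M / (1 - cmod w) + 1"
  proof -
    have "norm H \<le> norm (2 * S) + norm (1::'a)" unfolding H_def by (rule norm_triangle_ineq4)
    also have "norm (2 * S) \<le> 2 * norm S" using norm_mult_ineq[of "2::'a" S] by simp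
    finally show ?thesis using RS(3) by simp
  qed
  have "norm X \<le> norm (sc (2 * w) :: 'a) * (norm H * norm (sc k :: 'a))"
  proof -
    have "norm X \<le> norm (sc (2 * w) :: 'a) * norm (H * sc k)" unfolding X_def by (rule norm_mult_ineq)
    also have "\<dots> \<le> norm (sc (2 * w) :: 'a) * (norm H * norm (sc k :: 'a))"
      by (rule mult_left_mono[OF norm_mult_ineq norm_ge_zero])
    finally show ?thesis .
  qed
  also have "\<dots> = 2 * cmod w * norm H / cmod (1 - w ^ 2)" unfolding k_def by (simp add: norm_mult norm_divide)
  also have "\<dots> \<le> 2 * cmod w * (2 * M / (1 - cmod w) + 1) / cmod (1 - w ^ 2)"
    by (intro divide_right_mono mult_left_mono nH) auto
  finally show "norm (ainv (sc ((w + 1 / w) / 2) - d 1)) \<le> 2 * cmod w * (2 * M / (1 - cmod w) + 1) / cmod (1 - w ^ 2)"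
    using aX unfolding v_def z_def by simp
qed

lemma jouk_root:
  fixes z :: complex
  assumes "Im z \<noteq> 0 \<or> \<bar>Re z\<bar> > 1"
  shows "\<exists>w. w \<noteq> 0 \<and> cmod w < 1 \<and> z = (w + 1 / w) / 2"
proof -
  define s where "s = csqrt (z ^ 2 - 1)"
  define w1 where "w1 = z - s"
  define w2 where "w2 = z + s"
  have p: "w1 * w2 = 1" unfolding w1_def w2_def s_def
    by (simp add: algebra_simps power2_eq_square[symmetric])
  have w10: "w1 \<noteq> 0" using p by auto
  have w2i: "w2 = 1 / w1" using p w10 by (simp add: field_simps)
  have zs: "z = (w1 + w2) / 2" unfolding w1_def w2_def by simp
  have z1: "z = (w1 + 1 / w1) / 2" using zs w2i by simp
  have w20: "w2 \<noteq> 0" using p by auto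
  have z2: "z = (w2 + 1 / w2) / 2" using zs w2i w10 by (simp add: add.commute)
  show ?thesis
  proof (cases "cmod w1 < 1")
    case True then show ?thesis using w10 z1 by blast
  next
    case False
    show ?thesis
    proof (cases "cmod w1 = 1")
      case True
      have "w1 * cnj w1 = 1" using complex_norm_square[of w1] True by simp
      then have "1 / w1 = cnj w1" using w10 by (simp add: field_simps)
      then have "z = complex_of_real (Re w1)" using z1 complex_add_cnj[of w1] by simp
      moreover have "\<bar>Re w1\<bar> \<le> 1" using abs_Re_le_cmod[of w1] True by simp
      ultimately show ?thesis using assms by simp
    next
      case False
      with \<open>\<not> cmod w1 < 1\<close> have "cmod w1 > 1" by simp
      moreover have "cmod w2 = 1 / cmod w1" using w2i by (simp add: norm_divide)
      ultimately have "cmod w2 < 1" by (simp add: divide_less_eq)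
      then show ?thesis using w20 z2 by blast
    qed
  qed
qed

lemma resolvent_bound:
  fixes d :: "nat \<Rightarrow> 'a::cbanach_algebra_1"
  assumes rec: "\<And>n. d (n + 2) = 2 * d (n + 1) * d 1 - d n"
    and d0: "d 0 = 1"
    and bnd: "\<And>n. norm (d n) \<le> M"
    and dc: "\<And>n. d n * d 1 = d 1 * d n"
  shows "Im z \<noteq> 0 \<or> \<bar>Re z\<bar> > 1 \<Longrightarrow> invertible_elem (sc z - d 1)"
    and "Im z \<noteq> 0 \<Longrightarrow> norm (ainv (sc z - d 1)) * \<bar>Im z\<bar> \<le> 2 * (2 * M + 1)"
proof -
  assume "Im z \<noteq> 0 \<or> \<bar>Re z\<bar> > 1"
  then obtain w where w: "w \<noteq> 0" "cmod w < 1" "z = (w + 1 / w) / 2" using jouk_root by blast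
  show "invertible_elem (sc z - d 1)" by (subst w(3)) (rule resolvent_w(1)[OF rec d0 bnd dc w(2) w(1)])
next
  assume iz: "Im z \<noteq> 0"
  then obtain w where w: "w \<noteq> 0" "cmod w < 1" "z = (w + 1 / w) / 2" using jouk_root by blast
  define r where "r = cmod w"
  define R where "R = norm (ainv (sc z - d 1))"
  define Q where "Q = (1 - r) * cmod (1 - w ^ 2)"
  have M0: "M \<ge> 0" using bnd[of 0] norm_ge_zero[of "d 0"] by linarith
  have r0: "r > 0" "r < 1" unfolding r_def using w by auto
  have wq: "cmod (1 - w ^ 2) > 0"
  proof -
    have "cmod w ^ 2 < 1" using power_less_one_iff[of "cmod w" 2] w by simp
    then have "w ^ 2 \<noteq> 1"
    proof (intro notI)
      assume "cmod w ^ 2 < 1" "w ^ 2 = 1"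
      then have "cmod (w ^ 2) = 1" by simp
      then show False using \<open>cmod w ^ 2 < 1\<close> by (simp add: norm_power)
    qed
    then show ?thesis by simp
  qed
  have Q0: "Q > 0" unfolding Q_def using r0 wq by simp
  have J: "r * \<bar>Im z\<bar> \<le> Q" unfolding r_def Q_def w(3) by (rule jouk_ineq[OF w(1) w(2)])
  have "R \<le> 2 * r * (2 * M / (1 - r) + 1) / cmod (1 - w ^ 2)"
    unfolding R_def r_def by (subst w(3)) (rule resolvent_w(2)[OF rec d0 bnd dc w(2) w(1)])
  also have "\<dots> \<le> 2 * r * ((2 * M + 1) / (1 - r)) / cmod (1 - w ^ 2)"
  proof (intro divide_right_mono mult_left_mono)
    show "2 * M / (1 - r) + 1 \<le> (2 * M + 1) / (1 - r)"
    proof -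
      have "1 \<le> 1 / (1 - r)" using r0 by simp
      then show ?thesis by (simp add: add_divide_distrib)
    qed
  qed (use r0 in auto)
  also have "\<dots> = 2 * (2 * M + 1) * r / Q" unfolding Q_def using r0 by (simp add: field_simps)
  finally have R1: "R \<le> 2 * (2 * M + 1) * r / Q" .
  have "R * \<bar>Im z\<bar> \<le> 2 * (2 * M + 1) * r / Q * \<bar>Im z\<bar>" using R1 by (rule mult_right_mono) simp
  also have "\<dots> = 2 * (2 * M + 1) * (r * \<bar>Im z\<bar> / Q)" by simp
  also have "\<dots> \<le> 2 * (2 * M + 1) * 1"
  proof (rule mult_left_mono)
    show "r * \<bar>Im z\<bar> / Q \<le> 1" using J Q0 by simp
  qed (use M0 in simp)
  finally show "norm (ainv (sc z - d 1)) * \<bar>Im z\<bar> \<le> 2 * (2 * M + 1)" unfolding R_def by simp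
qed

lemma term_bound:
  fixes a q :: "'a::cbanach_algebra_1" and r :: real and u \<mu> :: complex
  assumes inv: "\<And>z. Im z \<noteq> 0 \<Longrightarrow> invertible_elem (sc z - a)"
    and bd: "\<And>z. Im z \<noteq> 0 \<Longrightarrow> norm (ainv (sc z - a)) * \<bar>Im z\<bar> \<le> C"
    and q: "q = a - sc \<mu>" and mu: "Im \<mu> = 0"
    and u: "cmod u = 1" and r: "r > 0"
  shows "norm (sc (cnj u - u) * ainv (1 - sc (u / r) * q)) \<le> 2 * C"
proof (cases "Im u = 0")
  case True
  then have "cnj u - u = 0" by (simp add: complex_eq_iff)
  then have "norm (sc (cnj u - u) * ainv (1 - sc (u / r) * q)) = 0" by simp
  moreover have "C \<ge> 0" using bd[of \<i>] by simp (meson norm_ge_zero order_trans)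
  ultimately show ?thesis by simp
next
  case False
  define z where "z = \<mu> + of_real r * cnj u"
  have Iz: "Im z = - r * Im u" unfolding z_def using mu by simp
  have Iz0: "Im z \<noteq> 0" using Iz False r by simp
  have u0: "u \<noteq> 0" using u by auto
  have ucnj: "u * cnj u = 1"
    using complex_norm_square[of u] u by (simp add: mult.commute)
  have e: "1 - sc (u / r) * q = sc (u / r) * (sc z - a)"
  proof -
    have zq: "sc z - a = sc (of_real r * cnj u) - q" unfolding z_def q by (simp add: sc_add)
    have "sc (u / r) * (sc z - a) = sc (u / r * (of_real r * cnj u)) - sc (u / r) * q"
      unfolding zq by (simp only: right_diff_distrib sc_mult[symmetric])
    also have "u / r * (of_real r * cnj u) = 1" using r ucnj by (simp add: field_simps)
    finally show ?thesis by simp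
  qed
  have ur: "u / complex_of_real r \<noteq> 0" using u0 r by simp
  note SI = sc_invertible[OF ur, where 'a='a]
  note IM = invertible_mult[OF SI[THEN conjunct1] inv[OF Iz0]]
  have ai: "ainv (1 - sc (u / r) * q) = ainv (sc z - a) * sc (1 / (u / r))"
    unfolding e using IM SI by simp
  have "norm (sc (cnj u - u) * ainv (1 - sc (u / r) * q))
      \<le> cmod (cnj u - u) * (norm (ainv (sc z - a)) * cmod (1 / (u / r)))"
    unfolding ai using norm_mult_ineq[of "sc (cnj u - u)" "ainv (sc z - a) * sc (1 / (u / r))"]
      norm_mult_ineq[of "ainv (sc z - a)" "sc (1 / (u / r)) :: 'a"]
    by (simp add: mult_left_mono order_trans)
  also have "cmod (cnj u - u) = 2 * \<bar>Im u\<bar>"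
  proof -
    have "cnj u - u = complex_of_real (- 2 * Im u) * \<i>" by (simp add: complex_eq_iff)
    then show ?thesis by (simp add: norm_mult)
  qed
  also have "cmod (1 / (u / r)) = r" using u r by (simp add: norm_divide)
  also have "2 * \<bar>Im u\<bar> * (norm (ainv (sc z - a)) * r) = 2 * (norm (ainv (sc z - a)) * \<bar>Im z\<bar>)"
    unfolding Iz using r by (simp add: abs_mult)
  also have "\<dots> \<le> 2 * C" using bd[OF Iz0] by simp
  finally show ?thesis .
qed

lemma norm_sc_mult: "norm (sc c * v) = cmod c * norm (v::'a::cbanach_algebra_1)"
  by (simp only: scaleC_eq[symmetric] norm_scaleC)

lemma norm_of_nat_mult: "norm (of_nat N * v) = real N * norm (v::'a::cbanach_algebra_1)"
proof -
  have "of_nat N * v = real N *\<^sub>R v" by (simp add: scaleR_conv_of_real)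
  then show ?thesis by simp
qed

lemma half_lt_quarter: "(t::real) < 1/2 \<Longrightarrow> t / 2 < 1/4" by simp

lemma q_bound_r:
  fixes a :: "'a::cbanach_algebra_1"
  assumes inv_ne: "\<And>z. z \<noteq> \<mu> \<Longrightarrow> invertible_elem (sc z - a)"
    and bd: "\<And>z. Im z \<noteq> 0 \<Longrightarrow> norm (ainv (sc z - a)) * \<bar>Im z\<bar> \<le> C"
    and mu: "Im \<mu> = 0" and r: "r > 0"
  shows "norm (a - sc \<mu>) \<le> r * (5 * C / 2 + 1 / 2)"
proof -
  define q where "q = a - sc \<mu>"
  have inv: "invertible_elem (sc z - a)" if "Im z \<noteq> 0" for z
  proof -
    have "z \<noteq> \<mu>" using that mu by auto
    then show ?thesis by (rule inv_ne)
  qed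
  have C0: "C \<ge> 0" using bd[of \<i>] by simp (meson norm_ge_zero order_trans)
  define x where "x = sc (complex_of_real (2 / r)) * q"
  have hx: "invertible_elem (1 - sc l * x)" if l: "cmod l \<le> 1" for l
  proof (cases "l = 0")
    case True then show ?thesis by simp
  next
    case False
    define c where "c = 2 * l / complex_of_real r"
    have c0: "c \<noteq> 0" unfolding c_def using False r by simp
    have e: "1 - sc l * x = sc c * (sc (\<mu> + 1 / c) - a)"
    proof -
      have "sc c * (sc (\<mu> + 1 / c) - a) = sc c * (sc (1 / c) - q)" unfolding q_def by (simp add: sc_add algebra_simps)
      also have "\<dots> = sc (c * (1 / c)) - sc c * q" by (simp only: right_diff_distrib sc_mult[symmetric])
      also have "c * (1 / c) = 1" using c0 by simp
      also have "sc c * q = sc l * x" unfolding x_def c_def by (simp add: sc_mult[symmetric] mult.assoc[symmetric]) (simp add: mult.commute)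
      finally show ?thesis by simp
    qed
    have "\<mu> + 1 / c \<noteq> \<mu>" using c0 by simp
    then show ?thesis unfolding e using invertible_mult[OF sc_invertible[OF c0, THEN conjunct1] inv_ne] by blast
  qed
  obtain N0 where N0: "N0 > 0" "norm (x ^ N0) \<le> 1" using rickart_step[OF hx] by blast
  obtain K where K: "\<And>n. norm (x ^ n) \<le> K" using power_bounded[OF N0] by blast
  define y where "y = sc (complex_of_real (1 / r)) * q"
  have ny: "norm (y ^ n) \<le> K / 2 ^ n" for n
  proof -
    have xy: "x = sc 2 * y" unfolding x_def y_def mult.assoc[symmetric] sc_mult[symmetric] by simp
    have "norm (x ^ n) = 2 ^ n * norm (y ^ n)" unfolding xy sc_mult_power norm_sc_mult by (simp add: norm_power)
    then show ?thesis using K[of n] by (simp add: field_simps)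
  qed
  have K0: "K \<ge> 0" using K[of 0] by simp
  have "(\<lambda>n. K / 2 ^ n) \<longlonglongrightarrow> 0" by (rule LIMSEQ_divide_realpow_zero) simp
  then obtain n0 where n0: "\<And>n. n \<ge> n0 \<Longrightarrow> K / 2 ^ n < 1/2"
    unfolding lim_sequentially by (metis (no_types, lifting) diff_zero dist_real_def abs_less_iff zero_less_divide_iff zero_less_numeral zero_less_one)
  define N where "N = max 2 n0 + 1"
  have N3: "N \<ge> 3" unfolding N_def by simp
  have kN1: "K / 2 ^ (N - 1) < 1/2" using n0[of "N - 1"] unfolding N_def by simp
  have yN1: "norm (y ^ (N - 1)) \<le> 1/2"
    using ny[of "N - 1"] kN1 by linarith
  have yN: "norm (y ^ N) \<le> 1/4"
  proof -
    have eq: "K / 2 ^ N = (K / 2 ^ (N - 1)) / 2" using N3 by (cases N) (simp_all add: field_simps)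
    have lt: "(K / 2 ^ (N - 1)) / 2 < 1/4" using kN1 by (rule half_lt_quarter)
    have "K / 2 ^ N < 1/4" unfolding eq by (rule lt)
    then show ?thesis using ny[of N] by linarith
  qed
  define Y where "Y = y ^ N"
  have iY: "invertible_elem (1 - Y)" unfolding Y_def using neumann(1)[of "y ^ N"] yN by simp
  define P where "P = ainv (1 - Y)"
  define T where "T = (y - y ^ (N - 1)) * P"
  have avg: "(\<Sum>j<N. sc (zet N ^ (j * (N - 1)) - zet N ^ j) * ainv (1 - sc (zet N ^ j) * y))
       = of_nat N * T"
    unfolding T_def P_def Y_def using avg_twisted[OF N3, of y] iY unfolding Y_def by (simp add: mult.assoc)
  have tb: "norm (sc (zet N ^ (j * (N - 1)) - zet N ^ j) * ainv (1 - sc (zet N ^ j) * y)) \<le> 2 * C" for j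
  proof -
    have N0': "N > 0" using N3 by simp
    have zn: "cmod (zet N ^ j) = 1" by (simp add: norm_power)
    have "zet N ^ (j * (N - 1)) * zet N ^ j = 1"
    proof -
      have "zet N ^ (j * (N - 1)) * zet N ^ j = zet N ^ (j * N)"
        using N3 by (simp add: power_add[symmetric] algebra_simps)
      also have "\<dots> = 1" using zet_pow_N[OF N0'] by (simp add: power_mult[symmetric] mult.commute[of j N] power_mult)
      finally show ?thesis .
    qed
    moreover have "cnj (zet N ^ j) * zet N ^ j = 1"
      using complex_norm_square[of "zet N ^ j"] zn by (simp add: mult.commute)
    ultimately have cz: "zet N ^ (j * (N - 1)) = cnj (zet N ^ j)"
      using zn by (metis mult_cancel_right norm_zero zero_neq_one)
    have sy: "sc (zet N ^ j) * y = sc (zet N ^ j / complex_of_real r) * q"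
      unfolding y_def by (simp add: sc_mult[symmetric] mult.assoc[symmetric] divide_inverse)
    show ?thesis unfolding cz sy
      by (rule term_bound[OF inv bd q_def mu zn r])
  qed
  have "real N * norm T = norm (of_nat N * T)" by (simp add: norm_of_nat_mult)
  also have "\<dots> \<le> (\<Sum>j<N. norm (sc (zet N ^ (j * (N - 1)) - zet N ^ j) * ainv (1 - sc (zet N ^ j) * y)))"
    unfolding avg[symmetric] by (rule norm_sum)
  also have "\<dots> \<le> (\<Sum>j<N. 2 * C)" by (rule sum_mono) (rule tb)
  also have "\<dots> = real N * (2 * C)" by simp
  finally have nT: "norm T \<le> 2 * C" using N3 by simp
  have eT: "y - y ^ (N - 1) = T * (1 - Y)" unfolding T_def P_def by (simp add: mult.assoc ainv_l[OF iY])
  have "norm (y - y ^ (N - 1)) \<le> norm T * norm (1 - Y)" unfolding eT by (rule norm_mult_ineq)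
  also have "\<dots> \<le> 2 * C * (5/4)"
  proof (rule mult_mono)
    show "norm (1 - Y) \<le> 5/4" using norm_triangle_ineq4[of 1 Y] yN unfolding Y_def by simp
  qed (use nT C0 in auto)
  finally have n1: "norm (y - y ^ (N - 1)) \<le> 5 * C / 2" by simp
  have "norm y \<le> norm (y - y ^ (N - 1)) + norm (y ^ (N - 1))" using norm_triangle_sub[of y "y ^ (N - 1)"] by linarith
  also have "\<dots> \<le> 5 * C / 2 + 1 / 2" using n1 yN1 by simp
  finally have "norm y \<le> 5 * C / 2 + 1 / 2" .
  moreover have "q = sc (complex_of_real r) * y" unfolding y_def using r
    by (simp add: sc_mult[symmetric] mult.assoc[symmetric])
  ultimately show ?thesis unfolding q_def[symmetric] using r by (simp add: norm_sc_mult mult_left_mono)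
qed

lemma q_zero:
  fixes a :: "'a::cbanach_algebra_1"
  assumes inv_ne: "\<And>z. z \<noteq> \<mu> \<Longrightarrow> invertible_elem (sc z - a)"
    and bd: "\<And>z. Im z \<noteq> 0 \<Longrightarrow> norm (ainv (sc z - a)) * \<bar>Im z\<bar> \<le> C"
    and mu: "Im \<mu> = 0"
  shows "a = sc \<mu>"
proof (rule ccontr)
  assume ne: "a \<noteq> sc \<mu>"
  define n where "n = norm (a - sc \<mu>)"
  define B where "B = 5 * C / 2 + 1 / 2"
  have C0: "C \<ge> 0" using bd[of \<i>] by simp (meson norm_ge_zero order_trans)
  have B0: "B \<ge> 0" unfolding B_def using C0 by simp
  have n0: "n > 0" unfolding n_def using ne by simp
  define r where "r = n / (2 * (B + 1))"
  have r0: "r > 0" unfolding r_def using n0 B0 by simp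
  have "n \<le> r * B" unfolding n_def B_def by (rule q_bound_r[OF inv_ne bd mu r0])
  also have "r * B = n * (B / (2 * (B + 1)))" unfolding r_def by simp
  also have "\<dots> < n * 1"
  proof (rule mult_strict_left_mono)
    show "B / (2 * (B + 1)) < 1" using B0 by (simp add: field_simps)
  qed (rule n0)
  finally show False by simp
qed

lemma d_cos:
  fixes d :: "nat \<Rightarrow> 'a::cbanach_algebra_1"
  assumes rec: "\<And>n. d (n + 2) = 2 * d (n + 1) * d 1 - d n"
    and d0: "d 0 = 1" and d1: "d 1 = sc (complex_of_real (cos b))"
  shows "d n = sc (complex_of_real (cos (real n * b)))"
proof -
  have "d n = sc (complex_of_real (cos (real n * b))) \<and> d (n + 1) = sc (complex_of_real (cos (real (n + 1) * b)))"
  proof (induct n)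
    case 0 then show ?case using d0 d1 by simp
  next
    case (Suc n)
    have tr: "cos (real (n + 2) * b) = 2 * cos (real (n + 1) * b) * cos b - cos (real n * b)"
    proof -
      have "cos (real (n + 2) * b) = cos (real (n + 1) * b + b)" by (simp add: algebra_simps)
      moreover have "cos (real n * b) = cos (real (n + 1) * b - b)" by (simp add: algebra_simps)
      ultimately show ?thesis by (simp add: cos_add cos_diff)
    qed
    have "d (n + 2) = 2 * sc (complex_of_real (cos (real (n + 1) * b))) * sc (complex_of_real (cos b))
        - sc (complex_of_real (cos (real n * b)))" using rec[of n] Suc d1 by simp
    also have "\<dots> = sc (complex_of_real (cos (real (n + 2) * b)))"
      unfolding tr by (simp add: sc_diff sc_mult)
    finally have "d (Suc n + 1) = sc (complex_of_real (cos (real (Suc n + 1) * b)))" by simp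
    then show ?case using Suc by simp
  qed
  then show ?thesis by blast
qed

theorem theorem2p3:
  fixes c :: "int \<Rightarrow> 'a::cbanach_algebra_1"
  assumes "cosine_sequence c"
    and "bounded (range c)"
    and "\<exists>\<mu>. spectrum (c 1) = {\<mu>}"
  shows "(\<forall>n\<ge>1. \<exists>z::complex. c n = scaleC z 1)
     \<and> (\<exists>b::real. \<forall>n\<ge>1. c n = scaleC (complex_of_real (cos (real_of_int n * b))) 1)"
proof -
  note cs = assms(1)
  obtain M where M: "\<And>n. norm (c n) \<le> M" using assms(2) unfolding bounded_iff by blast
  obtain \<mu> where sp: "spectrum (c 1) = {\<mu>}" using assms(3) by blast
  define d where "d = (\<lambda>n::nat. c (int n))"
  have rec: "d (n + 2) = 2 * d (n + 1) * d 1 - d n" for n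
    unfolding d_def using cos_rec[OF cs, of "int n"] by (simp add: add.commute)
  have d0: "d 0 = 1" unfolding d_def using cs unfolding cosine_sequence_def by simp
  have bnd: "norm (d n) \<le> M" for n unfolding d_def by (rule M)
  have dc: "d n * d 1 = d 1 * d n" for n unfolding d_def by (rule cos_comm[OF cs])
  have d1: "d 1 = c 1" unfolding d_def by simp
  have inv_iff: "invertible_elem (sc z - c 1) \<longleftrightarrow> z \<noteq> \<mu>" for z
    using sp unfolding spectrum_def sc_def by blast
  have mu: "Im \<mu> = 0 \<and> \<bar>Re \<mu>\<bar> \<le> 1"
  proof (rule ccontr)
    assume "\<not> (Im \<mu> = 0 \<and> \<bar>Re \<mu>\<bar> \<le> 1)"
    then have "Im \<mu> \<noteq> 0 \<or> \<bar>Re \<mu>\<bar> > 1" by auto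
    then have "invertible_elem (sc \<mu> - d 1)" by (rule resolvent_bound(1)[OF rec d0 bnd dc])
    then show False using inv_iff[of \<mu>] d1 by simp
  qed
  have a: "c 1 = sc \<mu>"
  proof (rule q_zero)
    show "\<And>z. z \<noteq> \<mu> \<Longrightarrow> invertible_elem (sc z - c 1)" using inv_iff by blast
    show "\<And>z. Im z \<noteq> 0 \<Longrightarrow> norm (ainv (sc z - c 1)) * \<bar>Im z\<bar> \<le> 2 * (2 * M + 1)"
      using resolvent_bound(2)[OF rec d0 bnd dc] d1 by simp
    show "Im \<mu> = 0" using mu by simp
  qed
  define b where "b = arccos (Re \<mu>)"
  have cb: "cos b = Re \<mu>" unfolding b_def using mu by (intro cos_arccos) (simp_all add: abs_le_iff)
  have muR: "\<mu> = complex_of_real (cos b)" using mu cb by (simp add: complex_eq_iff)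
  have dn: "d n = sc (complex_of_real (cos (real n * b)))" for n
    by (rule d_cos[OF rec d0]) (use d1 a muR in simp)
  have main: "c n = scaleC (complex_of_real (cos (real_of_int n * b))) 1" if "n \<ge> 1" for n
  proof -
    have "n \<ge> 0" using that by simp
    then obtain m where m: "n = int m" using nonneg_int_cases by blast
    have "c n = d m" unfolding d_def m ..
    also have "\<dots> = sc (complex_of_real (cos (real m * b)))" by (rule dn)
    finally show ?thesis unfolding m sc_def by simp
  qed
  show ?thesis using main by blast
qed

end
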